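(* On $\mathbb{R}^3$ with coordinates $(x,y,z)$ (the Heisenberg group $H_3$), let $\theta^1 = x\,dy + dz$, $\theta^2 = dy$, $\theta^3 = dx$. For arbitrary positive constants $A,B,C$, consider the left-invariant Lorentzian metric $$g = A\,(\theta^1)^2 + B\,(\theta^2)^2 - C\,(\theta^3)^2 .$$ Then there exist a smooth vector field $X$ on $\mathbb{R}^3$ and a constant $\alpha<0$ such that $$2\,\mathrm{Ric}[g] + L_X g + \alpha\, g = 0 .$$ That is, every such metric is a shrinking Lorentzian Ricci soliton.
   Context: $L_X$ denotes the Lie derivative along $X$. A Ricci soliton with $\alpha<0$ in the equation $2\,\mathrm{Ric}[g] + L_X g + \alpha g = 0$ is called shrinking. *)

theory Defs
  imports "HOL-Analysis.Analysis"
begin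

text \<open>Coordinate calculus on R^3 = real^3; coordinates (x,y,z) are components 1,2,3.\<close>

type_synonym pt = "real^3"

definition partial :: "3 \<Rightarrow> (pt \<Rightarrow> real) \<Rightarrow> pt \<Rightarrow> real" where
  "partial i f p = deriv (\<lambda>t. f (p + t *\<^sub>R axis i 1)) 0"

fun iter_partial :: "3 list \<Rightarrow> (pt \<Rightarrow> real) \<Rightarrow> pt \<Rightarrow> real" where
  "iter_partial [] f = f"
| "iter_partial (i # is) f = partial i (iter_partial is f)"

definition smooth_fun :: "(pt \<Rightarrow> real) \<Rightarrow> bool" where
  "smooth_fun f \<longleftrightarrow> (\<forall>is p. iter_partial is f differentiable (at p))"

definition smooth_vf :: "(pt \<Rightarrow> real^3) \<Rightarrow> bool" where
  "smooth_vf X \<longleftrightarrow> (\<forall>k. smooth_fun (\<lambda>p. X p $ k))"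

text \<open>Symmetric 2-tensor fields given by components in the coordinate frame.\<close>
type_synonym tensor2 = "pt \<Rightarrow> real^3^3"

definition inv_metric :: "tensor2 \<Rightarrow> tensor2" where
  "inv_metric g p = matrix_inv (g p)"

definition christoffel :: "tensor2 \<Rightarrow> 3 \<Rightarrow> 3 \<Rightarrow> 3 \<Rightarrow> pt \<Rightarrow> real" where
  "christoffel g k i j p = (1/2) * (\<Sum>l\<in>UNIV. inv_metric g p $ k $ l *
      (partial i (\<lambda>q. g q $ j $ l) p + partial j (\<lambda>q. g q $ i $ l) p
       - partial l (\<lambda>q. g q $ i $ j) p))"

definition ricci :: "tensor2 \<Rightarrow> tensor2" where
  "ricci g p = (\<chi> i j. (\<Sum>k\<in>UNIV.
      partial k (christoffel g k i j) p - partial j (christoffel g k i k) p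
      + (\<Sum>l\<in>UNIV. christoffel g k k l p * christoffel g l i j p
                   - christoffel g k j l p * christoffel g l i k p)))"

definition lie_deriv :: "(pt \<Rightarrow> real^3) \<Rightarrow> tensor2 \<Rightarrow> tensor2" where
  "lie_deriv X g p = (\<chi> i j. (\<Sum>k\<in>UNIV.
      X p $ k * partial k (\<lambda>q. g q $ i $ j) p
      + g p $ k $ j * partial i (\<lambda>q. X q $ k) p
      + g p $ i $ k * partial j (\<lambda>q. X q $ k) p))"

text \<open>The metric g = A (x dy + dz)^2 + B dy^2 - C dx^2 on H_3 in coordinates (x,y,z).\<close>
definition heis_metric :: "real \<Rightarrow> real \<Rightarrow> real \<Rightarrow> tensor2" where
  "heis_metric A B C p = (let x = p $ 1 in
     vector [vector [- C, 0, 0],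
             vector [0, A * x\<^sup>2 + B, A * x],
             vector [0, A * x, A]])"

end

theory Submission
  imports Defs
begin

lemma matrix_inv_eq:
  fixes M N :: "real^3^3"
  assumes "M ** N = mat 1" "N ** M = mat 1"
  shows "matrix_inv M = N"
proof -
  have ex: "\<exists>N'. M ** N' = mat 1 \<and> N' ** M = mat 1" using assms by blast
  define N' where "N' = matrix_inv M"
  have h: "M ** N' = mat 1 \<and> N' ** M = mat 1"
    unfolding N'_def matrix_inv_def by (rule someI_ex[OF ex])
  have "N' = N' ** (M ** N)" using assms by (simp add: matrix_mul_rid)
  also have "\<dots> = (N' ** M) ** N" by (simp add: matrix_mul_assoc)
  also have "\<dots> = N" using h by (simp add: matrix_mul_lid)
  finally show ?thesis unfolding N'_def .
qed

definition ginv :: "real \<Rightarrow> real \<Rightarrow> real \<Rightarrow> real \<Rightarrow> real^3^3" where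
  "ginv A B C x = vector [vector [-1/C, 0, 0],
             vector [0, 1/B, -x/B],
             vector [0, -x/B, x\<^sup>2/B + 1/A]]"

lemma inv_heis:
  assumes "A > 0" "B > 0" "C > 0"
  shows "inv_metric (heis_metric A B C) p = ginv A B C (p$1)"
proof -
  have 1: "heis_metric A B C p ** ginv A B C (p$1) = mat 1"
    unfolding heis_metric_def Let_def ginv_def matrix_matrix_mult_def vec_eq_iff forall_3 sum_3
    apply (simp add: mat_def)
    using assms apply (simp add: field_simps power2_eq_square)
    done
  have 2: "ginv A B C (p$1) ** heis_metric A B C p = mat 1"
    unfolding heis_metric_def Let_def ginv_def matrix_matrix_mult_def vec_eq_iff forall_3 sum_3
    apply (simp add: mat_def)
    using assms apply (simp add: field_simps power2_eq_square)
    done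
  show ?thesis unfolding inv_metric_def by (rule matrix_inv_eq[OF 1 2])
qed

lemma partial_x:
  assumes "\<And>x. (h has_real_derivative h' x) (at x)"
  shows "partial i (\<lambda>q. h (q$1)) p = (if i = 1 then h' (p$1) else 0)"
proof -
  have e: "(\<lambda>t. h ((p + t *\<^sub>R axis i 1) $ 1)) = (\<lambda>t. h (p$1 + t * (if i = 1 then 1 else 0)))"
    by (auto simp: axis_def)
  have "((\<lambda>t. h (p$1 + t * (if i = 1 then 1 else 0))) has_real_derivative
          h' (p$1 + 0 * (if i = 1 then 1 else 0)) * (if i = 1 then 1 else 0)) (at 0)"
    by (rule DERIV_chain2[OF assms]) (auto intro!: derivative_eq_intros)
  then show ?thesis unfolding partial_def e by (auto dest!: DERIV_imp_deriv)
qed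

lemma partial_lin:
  "partial i (\<lambda>q. a + c * q$j) p = (if i = j then c else 0)"
proof -
  have e: "(\<lambda>t. a + c * (p + t *\<^sub>R axis i 1) $ j) = (\<lambda>t. a + c * p$j + t * (if i = j then c else 0))"
    by (auto simp: axis_def algebra_simps)
  have "((\<lambda>t. a + c * p$j + t * (if i = j then c else 0)) has_real_derivative (if i = j then c else 0)) (at 0)"
    by (auto intro!: derivative_eq_intros)
  then show ?thesis unfolding partial_def e by (auto dest!: DERIV_imp_deriv)
qed

lemma if_deriv:
  "(f has_real_derivative f') F \<Longrightarrow> (g has_real_derivative g') F \<Longrightarrow>
   ((\<lambda>x. if P then f x else g x) has_real_derivative (if P then f' else g')) F"
  by (cases P) auto

lemma d_lin: "((\<lambda>x. a * x) has_real_derivative a) (at x)"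
  by (rule derivative_eq_intros refl | simp)+

lemma d_quad: "((\<lambda>x. a * x\<^sup>2 + b) has_real_derivative 2 * a * x) (at x)"
  by (rule derivative_eq_intros refl | simp)+

definition gf :: "real \<Rightarrow> real \<Rightarrow> real \<Rightarrow> 3 \<Rightarrow> 3 \<Rightarrow> real \<Rightarrow> real" where
  "gf A B C i j x = (if i = 1 \<and> j = 1 then -C else if i = 2 \<and> j = 2 then A*x\<^sup>2+B
     else if (i = 2 \<and> j = 3) \<or> (i = 3 \<and> j = 2) then A*x else if i = 3 \<and> j = 3 then A else 0)"

definition dgf :: "real \<Rightarrow> 3 \<Rightarrow> 3 \<Rightarrow> real \<Rightarrow> real" where
  "dgf A i j x = (if i = 1 \<and> j = 1 then 0 else if i = 2 \<and> j = 2 then 2*A*x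
     else if (i = 2 \<and> j = 3) \<or> (i = 3 \<and> j = 2) then A else if i = 3 \<and> j = 3 then 0 else 0)"

lemma g_entry: "heis_metric A B C q $ i $ j = gf A B C i j (q$1)"
  using exhaust_3[of i] exhaust_3[of j]
  by (auto simp: heis_metric_def gf_def Let_def)

lemma gf_deriv: "(gf A B C i j has_real_derivative dgf A i j x) (at x)"
  unfolding gf_def[abs_def] dgf_def
  by (rule if_deriv d_lin d_quad DERIV_const)+

lemma partial_g: "partial l (\<lambda>q. heis_metric A B C q $ i $ j) p = (if l = 1 then dgf A i j (p$1) else 0)"
  unfolding g_entry by (rule partial_x[OF gf_deriv])

definition Gam :: "real \<Rightarrow> real \<Rightarrow> real \<Rightarrow> 3 \<Rightarrow> 3 \<Rightarrow> 3 \<Rightarrow> real \<Rightarrow> real" where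
  "Gam A B C k i j x =
    (if k = 1 \<and> i = 2 \<and> j = 2 then (A/C)*x
     else if k = 1 \<and> ((i = 2 \<and> j = 3) \<or> (i = 3 \<and> j = 2)) then A/(2*C)
     else if k = 2 \<and> ((i = 1 \<and> j = 2) \<or> (i = 2 \<and> j = 1)) then (A/(2*B))*x
     else if k = 3 \<and> ((i = 1 \<and> j = 2) \<or> (i = 2 \<and> j = 1)) then (-(A/(2*B)))*x\<^sup>2 + 1/2
     else if k = 2 \<and> ((i = 1 \<and> j = 3) \<or> (i = 3 \<and> j = 1)) then A/(2*B)
     else if k = 3 \<and> ((i = 1 \<and> j = 3) \<or> (i = 3 \<and> j = 1)) then (-(A/(2*B)))*x
     else 0)"

definition dGam :: "real \<Rightarrow> real \<Rightarrow> real \<Rightarrow> 3 \<Rightarrow> 3 \<Rightarrow> 3 \<Rightarrow> real \<Rightarrow> real" where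
  "dGam A B C k i j x =
    (if k = 1 \<and> i = 2 \<and> j = 2 then A/C
     else if k = 1 \<and> ((i = 2 \<and> j = 3) \<or> (i = 3 \<and> j = 2)) then 0
     else if k = 2 \<and> ((i = 1 \<and> j = 2) \<or> (i = 2 \<and> j = 1)) then A/(2*B)
     else if k = 3 \<and> ((i = 1 \<and> j = 2) \<or> (i = 2 \<and> j = 1)) then 2*(-(A/(2*B)))*x
     else if k = 2 \<and> ((i = 1 \<and> j = 3) \<or> (i = 3 \<and> j = 1)) then 0
     else if k = 3 \<and> ((i = 1 \<and> j = 3) \<or> (i = 3 \<and> j = 1)) then -(A/(2*B))
     else 0)"

lemma Gam_deriv: "(Gam A B C k i j has_real_derivative dGam A B C k i j x) (at x)"
  unfolding Gam_def[abs_def] dGam_def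
  by (rule if_deriv d_lin d_quad DERIV_const)+

lemma chr0:
  assumes "A > 0" "B > 0" "C > 0"
  shows "christoffel (heis_metric A B C) k i j q = (1/2) * (\<Sum>l\<in>UNIV. ginv A B C (q$1) $ k $ l *
      ((if i = 1 then dgf A j l (q$1) else 0) + (if j = 1 then dgf A i l (q$1) else 0)
       - (if l = 1 then dgf A i j (q$1) else 0)))"
  unfolding christoffel_def inv_heis[OF assms] partial_g ..

lemma chr:
  assumes "A > 0" "B > 0" "C > 0"
  shows "christoffel (heis_metric A B C) k i j = (\<lambda>q. Gam A B C k i j (q$1))"
proof
  fix q
  have "\<forall>k i j. christoffel (heis_metric A B C) k i j q = Gam A B C k i j (q$1)"
    unfolding chr0[OF assms] sum_3 forall_3
    using assms
    by (simp add: ginv_def Gam_def dgf_def field_simps power2_eq_square)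
  then show "christoffel (heis_metric A B C) k i j q = Gam A B C k i j (q$1)" by blast
qed


lemma iter_lin: "\<exists>a' c'. iter_partial ds (\<lambda>q. a + c * q$j) = (\<lambda>q. a' + c' * q$j)"
proof (induction ds)
  case Nil show ?case by auto
next
  case (Cons i ds)
  then obtain a' c' where e: "iter_partial ds (\<lambda>q. a + c * q$j) = (\<lambda>q. a' + c' * q$j)" by blast
  show ?case
    by (rule exI[of _ "if i = j then c' else 0"], rule exI[of _ 0])
       (simp add: e partial_lin[of _ a' c' j])
qed

lemma smooth_lin: "smooth_fun (\<lambda>q. a + c * q$j)"
  unfolding smooth_fun_def
proof (intro allI)
  fix ds p
  obtain a' c' where e: "iter_partial ds (\<lambda>q. a + c * q$j) = (\<lambda>q. a' + c' * q$j)"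
    using iter_lin by blast
  have "(\<lambda>q::real^3. q$j) differentiable (at p)"
    using bounded_linear_vec_nth bounded_linear_imp_differentiable by blast
  then show "iter_partial ds (\<lambda>q. a + c * q$j) differentiable (at p)"
    unfolding e by (intro differentiable_add differentiable_mult differentiable_const)
qed

definition Xf :: "real \<Rightarrow> real^3 \<Rightarrow> real^3" where
  "Xf k q = (\<chi> m. (if m = 3 then 2*k else k) * q$m)"

lemma Xf_comp: "(\<lambda>q. Xf k q $ m) = (\<lambda>q. 0 + (if m = 3 then 2*k else k) * q$m)"
  by (simp add: Xf_def)

lemma smooth_X: "smooth_vf (Xf k)"
  unfolding smooth_vf_def Xf_comp by (intro allI smooth_lin)

lemma partial_X: "partial i (\<lambda>q. Xf k q $ m) p = (if i = m then (if m = 3 then 2*k else k) else 0)"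
  unfolding Xf_comp partial_lin ..


lemma ric:
  assumes "A > 0" "B > 0" "C > 0"
  shows "\<forall>i j. ricci (heis_metric A B C) p $ i $ j =
    (if i = 1 \<and> j = 1 then -(A/(2*B)) else if i = 2 \<and> j = 2 then A/(2*C) - A\<^sup>2*(p$1)\<^sup>2/(2*B*C)
     else if (i = 2 \<and> j = 3) \<or> (i = 3 \<and> j = 2) then -(A\<^sup>2*(p$1)/(2*B*C))
     else if i = 3 \<and> j = 3 then -(A\<^sup>2/(2*B*C)) else 0)"
proof -
  have pG: "partial l (christoffel (heis_metric A B C) k i j) p = (if l = 1 then dGam A B C k i j (p$1) else 0)"
    for l k i j
    unfolding chr[OF assms] by (rule partial_x[OF Gam_deriv])
  have cG: "christoffel (heis_metric A B C) k i j p = Gam A B C k i j (p$1)" for k i j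
    unfolding chr[OF assms] ..
  show ?thesis
    unfolding ricci_def vec_lambda_beta pG cG sum_3 forall_3
    apply (simp add: Gam_def dGam_def)
    using assms
    apply (simp_all add: field_simps power2_eq_square)
    done
qed


theorem mainTheorem2:
  fixes A B C :: real
  assumes "A > 0" and "B > 0" and "C > 0"
  shows "\<exists>(X :: real^3 \<Rightarrow> real^3) (\<alpha> :: real). smooth_vf X \<and> \<alpha> < 0 \<and>
           (\<forall>p. 2 *\<^sub>R ricci (heis_metric A B C) p + lie_deriv X (heis_metric A B C) p
                 + \<alpha> *\<^sub>R heis_metric A B C p = 0)"
proof (intro exI conjI allI)
  let ?k = "A / (B*C)"
  show "smooth_vf (Xf ?k)" by (rule smooth_X)
  show "- 3 * ?k < 0" using assms by (simp add: field_simps)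
  fix p :: "real^3"
  have R: "\<forall>i j. ricci (heis_metric A B C) p $ i $ j =
    (if i = 1 \<and> j = 1 then -(A/(2*B)) else if i = 2 \<and> j = 2 then A/(2*C) - A\<^sup>2*(p$1)\<^sup>2/(2*B*C)
     else if (i = 2 \<and> j = 3) \<or> (i = 3 \<and> j = 2) then -(A\<^sup>2*(p$1)/(2*B*C))
     else if i = 3 \<and> j = 3 then -(A\<^sup>2/(2*B*C)) else 0)"
    by (rule ric[OF assms])
  have "\<forall>i j. 2 * ricci (heis_metric A B C) p $ i $ j + lie_deriv (Xf ?k) (heis_metric A B C) p $ i $ j
          + (- 3 * ?k) * heis_metric A B C p $ i $ j = 0"
    unfolding lie_deriv_def vec_lambda_beta partial_g partial_X
    unfolding g_entry sum_3 forall_3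
    using R unfolding forall_3
    apply (simp add: gf_def dgf_def Xf_def)
    using assms
    apply (simp_all add: field_simps power2_eq_square)
    done
  then show "2 *\<^sub>R ricci (heis_metric A B C) p + lie_deriv (Xf ?k) (heis_metric A B C) p
                 + (- 3 * ?k) *\<^sub>R heis_metric A B C p = 0"
    by (simp add: vec_eq_iff)
qed

end
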